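(* Let $m\ge2$ be an integer and let $\phi_1,\dots,\phi_m$ be positive functions of $2m$ real variables $x^1,\dots,x^{2m}$ (on an open set of $\mathbb{R}^{2m}$). Set $\phi=\phi_1\cdots\phi_m$, $\chi_i=dx^{2i-1}\wedge dx^{2i}$, $\sigma_i=\phi_i^{1-m}\phi\,\chi_i$, $\sigma=\sigma_1+\dots+\sigma_m$, and $\zeta=\zeta_1+\dots+\zeta_m$ with $\zeta_i=-\sigma_1\wedge\dots\wedge\widehat{\sigma_i}\wedge\dots\wedge\sigma_m$ (hat meaning omission). Then: (a) $\zeta$ is algebraically constant and indivisible; (b) $\sigma$ and $\zeta$ are dual to each other; (c) $\zeta$ is closed if and only if $\partial_{2i-1}\phi_i=\partial_{2i}\phi_i=0$ for every $i=1,\dots,m$ (no summation); (d) $\sigma$ is closed if and only if $\partial_k[\phi_i^{1-m}\phi]=0$ whenever $k\notin\{2i-1,2i\}$, which in turn is equivalent to the existence of functions $\rho_1,\dots,\rho_m$, each $\rho_j$ depending only on $x^{2j-1},x^{2j}$, with $\phi_i=\rho_1\cdots\widehat{\rho_i}\cdots\rho_m$ for all $i$.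
   Context: A differential form is algebraically constant if it has the same algebraic type at all points. A differential form $\zeta$ is indivisible if at each point $\xi\wedge\zeta\neq0$ for every nonzero covector $\xi$. The dual of a nondegenerate $2$-form $\sigma$ on a $2m$-dimensional space: writing $\sigma=\sum_{i=1}^m\xi^{2i-1}\wedge\xi^{2i}$ in a suitable basis $\xi^1,\dots,\xi^{2m}$ of the dual space, the dual is $-\sum_{i=1}^m\sigma_1\wedge\dots\wedge\widehat{\sigma_i}\wedge\dots\wedge\sigma_m$ with $\sigma_i=\xi^{2i-1}\wedge\xi^{2i}$ (equivalently $\omega\beta$, the contraction of the volume form $\omega=\sigma^{\wedge m}/m!$ against the bivector $\beta$ reciprocal to $\sigma$); for forms on manifolds duality is defined pointwise. *)

theory Defs
  imports "HOL-Analysis.Analysis" "HOL-Library.Function_Algebras"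
begin

text \<open>Points of R^n are functions x :: nat => real with coordinates
x 1, ..., x n and x k = 0 for k outside {1..n}; the set of such points carries the
(Euclidean = product) topology inherited from the product topology on nat => real.
A (pointwise) differential form on R^n is given by its coefficients w :: nat set => real,
w I being the coefficient of dx^I = dx^{i1} /\ ... /\ dx^{ik} (i1 < ... < ik), I = {i1,...,ik}.\<close>

definition Rn :: "nat \<Rightarrow> (nat \<Rightarrow> real) set" where
  "Rn n = {x. \<forall>k. k \<notin> {1..n} \<longrightarrow> x k = 0}"

definition open_Rn :: "nat \<Rightarrow> (nat \<Rightarrow> real) set \<Rightarrow> bool" where
  "open_Rn n U \<longleftrightarrow> U \<subseteq> Rn n \<and> openin (top_of_set (Rn n)) U"

definition pderiv :: "nat \<Rightarrow> ((nat \<Rightarrow> real) \<Rightarrow> real) \<Rightarrow> (nat \<Rightarrow> real) \<Rightarrow> real" where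
  "pderiv k f x = deriv (\<lambda>t. f (x(k := t))) (x k)"

fun ipd :: "nat list \<Rightarrow> ((nat \<Rightarrow> real) \<Rightarrow> real) \<Rightarrow> (nat \<Rightarrow> real) \<Rightarrow> real" where
  "ipd [] f = f"
| "ipd (k # ks) f = pderiv k (ipd ks f)"

definition smooth_on :: "nat \<Rightarrow> (nat \<Rightarrow> real) set \<Rightarrow> ((nat \<Rightarrow> real) \<Rightarrow> real) \<Rightarrow> bool" where
  "smooth_on n U f \<longleftrightarrow>
     (\<forall>ks. set ks \<subseteq> {1..n} \<longrightarrow>
        continuous_on U (ipd ks f) \<and>
        (\<forall>k\<in>{1..n}. \<forall>x\<in>U. (\<lambda>t. ipd ks f (x(k := t))) differentiable (at (x k))))"

definition form_deg :: "nat \<Rightarrow> nat \<Rightarrow> (nat set \<Rightarrow> real) \<Rightarrow> bool" where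
  "form_deg n k w \<longleftrightarrow> (\<forall>I. w I \<noteq> 0 \<longrightarrow> I \<subseteq> {1..n} \<and> card I = k)"

definition fsmult :: "real \<Rightarrow> (nat set \<Rightarrow> real) \<Rightarrow> nat set \<Rightarrow> real" where
  "fsmult c w = (\<lambda>I. c * w I)"

definition dx :: "nat \<Rightarrow> nat set \<Rightarrow> real" where
  "dx i = (\<lambda>I. if I = {i} then 1 else 0)"

definition fone :: "nat set \<Rightarrow> real" where
  "fone = (\<lambda>I. if I = {} then 1 else 0)"

definition wsign :: "nat set \<Rightarrow> nat set \<Rightarrow> real" where
  "wsign I J = (-1) ^ card {(i, j). i \<in> I \<and> j \<in> J \<and> j < i}"

definition wedge :: "(nat set \<Rightarrow> real) \<Rightarrow> (nat set \<Rightarrow> real) \<Rightarrow> nat set \<Rightarrow> real" where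
  "wedge a b = (\<lambda>K. \<Sum>I\<in>Pow K. wsign I (K - I) * a I * b (K - I))"

definition wedges :: "(nat set \<Rightarrow> real) list \<Rightarrow> nat set \<Rightarrow> real" where
  "wedges ws = foldr wedge ws fone"

definition lin :: "nat \<Rightarrow> (nat \<Rightarrow> nat \<Rightarrow> real) \<Rightarrow> nat \<Rightarrow> nat set \<Rightarrow> real" where
  "lin n A i = (\<Sum>j\<in>{1..n}. fsmult (A i j) (dx j))"

definition invertible_on :: "nat \<Rightarrow> (nat \<Rightarrow> nat \<Rightarrow> real) \<Rightarrow> bool" where
  "invertible_on n A \<longleftrightarrow> (\<exists>B. \<forall>i\<in>{1..n}. \<forall>j\<in>{1..n}.
      (\<Sum>k\<in>{1..n}. A i k * B k j) = (if i = j then 1 else 0) \<and>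
      (\<Sum>k\<in>{1..n}. B i k * A k j) = (if i = j then 1 else 0))"

definition pullback :: "nat \<Rightarrow> (nat \<Rightarrow> nat \<Rightarrow> real) \<Rightarrow> (nat set \<Rightarrow> real) \<Rightarrow> nat set \<Rightarrow> real" where
  "pullback n A w = (\<Sum>I\<in>Pow {1..n}. fsmult (w I) (wedges (map (lin n A) (sorted_list_of_set I))))"

definition same_type :: "nat \<Rightarrow> (nat set \<Rightarrow> real) \<Rightarrow> (nat set \<Rightarrow> real) \<Rightarrow> bool" where
  "same_type n w1 w2 \<longleftrightarrow> (\<exists>A. invertible_on n A \<and> pullback n A w1 = w2)"

definition alg_constant :: "nat \<Rightarrow> (nat \<Rightarrow> real) set \<Rightarrow> ((nat \<Rightarrow> real) \<Rightarrow> nat set \<Rightarrow> real) \<Rightarrow> bool" where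
  "alg_constant n U w \<longleftrightarrow> (\<forall>p\<in>U. \<forall>q\<in>U. same_type n (w p) (w q))"

definition indivisible :: "nat \<Rightarrow> (nat \<Rightarrow> real) set \<Rightarrow> ((nat \<Rightarrow> real) \<Rightarrow> nat set \<Rightarrow> real) \<Rightarrow> bool" where
  "indivisible n U w \<longleftrightarrow>
     (\<forall>x\<in>U. \<forall>\<xi>. form_deg n 1 \<xi> \<and> \<xi> \<noteq> 0 \<longrightarrow> wedge \<xi> (w x) \<noteq> 0)"

text \<open>zeta is the dual of the nondegenerate 2-form s on R^n (n = 2 mm): in some basis
xi^1..xi^n of the dual space, s = sum_i xi^{2i-1} /\ xi^{2i} and
zeta = - sum_i s_1 /\ ... (omit s_i) ... /\ s_mm with s_i = xi^{2i-1} /\ xi^{2i}.\<close>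
definition is_dual :: "nat \<Rightarrow> (nat set \<Rightarrow> real) \<Rightarrow> (nat set \<Rightarrow> real) \<Rightarrow> bool" where
  "is_dual n s z \<longleftrightarrow> even n \<and> (\<exists>B. invertible_on n B \<and>
     (let mm = n div 2;
          si = (\<lambda>i. wedge (lin n B (2*i - 1)) (lin n B (2*i)))
      in s = (\<Sum>i\<in>{1..mm}. si i) \<and>
         z = - (\<Sum>i\<in>{1..mm}. wedges (map si (filter (\<lambda>j. j \<noteq> i) [1..<mm+1])))))"

definition dual_fields :: "nat \<Rightarrow> (nat \<Rightarrow> real) set \<Rightarrow> ((nat \<Rightarrow> real) \<Rightarrow> nat set \<Rightarrow> real)
      \<Rightarrow> ((nat \<Rightarrow> real) \<Rightarrow> nat set \<Rightarrow> real) \<Rightarrow> bool" where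
  "dual_fields n U s z \<longleftrightarrow> (\<forall>x\<in>U. is_dual n (s x) (z x))"

definition dform :: "((nat \<Rightarrow> real) \<Rightarrow> nat set \<Rightarrow> real) \<Rightarrow> (nat \<Rightarrow> real) \<Rightarrow> nat set \<Rightarrow> real" where
  "dform w x K = (\<Sum>k\<in>K. (-1) ^ card {i\<in>K. i < k} * pderiv k (\<lambda>y. w y (K - {k})) x)"

definition closed_on :: "nat \<Rightarrow> (nat \<Rightarrow> real) set \<Rightarrow> ((nat \<Rightarrow> real) \<Rightarrow> nat set \<Rightarrow> real) \<Rightarrow> bool" where
  "closed_on n U w \<longleftrightarrow> (\<forall>x\<in>U. \<forall>K. K \<subseteq> {1..n} \<longrightarrow> dform w x K = 0)"

end

theory Submission
  imports Defs
begin


definition bvec :: "nat set \<Rightarrow> nat set \<Rightarrow> real" where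
  "bvec K = (\<lambda>I. if I = K then 1 else 0)"

lemma fun_sum_apply: "(\<Sum>i\<in>S. f i) x = (\<Sum>i\<in>S. f i x)"
  by (induction S rule: infinite_finite_induct) (auto simp: plus_fun_def)

lemma fun_uminus_apply: "(- f) x = - (f x)" by simp

lemma wedge_bvec:
  assumes "finite I" "finite J"
  shows "wedge (bvec I) (bvec J) = (if I \<inter> J = {} then fsmult (wsign I J) (bvec (I \<union> J)) else (\<lambda>_. 0))"
proof (rule ext)
  fix K
  show "wedge (bvec I) (bvec J) K = (if I \<inter> J = {} then fsmult (wsign I J) (bvec (I \<union> J)) else (\<lambda>_. 0)) K"
  proof (cases "finite K")
    case False
    then have "K \<noteq> I \<union> J" using assms by auto
    then show ?thesis using False by (auto simp: wedge_def bvec_def fsmult_def)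
  next
    case True
    have "wedge (bvec I) (bvec J) K = (\<Sum>I'\<in>Pow K. if I' = I then (if K - I = J then wsign I J else 0) else 0)"
      unfolding wedge_def bvec_def by (intro sum.cong) auto
    also have "\<dots> = (if I \<subseteq> K then (if K - I = J then wsign I J else 0) else 0)"
      using True by (simp add: sum.delta')
    finally show ?thesis by (auto simp: fsmult_def bvec_def)
  qed
qed

lemma wedge_fsmult_left: "wedge (fsmult c a) b = fsmult c (wedge a b)"
  by (auto simp: wedge_def fsmult_def sum_distrib_left intro!: ext sum.cong)

lemma wedge_fsmult_right: "wedge a (fsmult c b) = fsmult c (wedge a b)"
  by (auto simp: wedge_def fsmult_def sum_distrib_left intro!: ext sum.cong)

lemma fsmult_fsmult: "fsmult a (fsmult b w) = fsmult (a*b) w"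
  by (auto simp: fsmult_def)

lemma dx_bvec: "dx i = bvec {i}" by (simp add: dx_def bvec_def)
lemma fone_bvec: "fone = bvec {}" by (simp add: fone_def bvec_def)

lemma wsign_empty: "(\<And>i j. i \<in> I \<Longrightarrow> j \<in> J \<Longrightarrow> i < j) \<Longrightarrow> wsign I J = 1"
proof -
  assume h: "\<And>i j. i \<in> I \<Longrightarrow> j \<in> J \<Longrightarrow> i < j"
  have e: "{(i, j). i \<in> I \<and> j \<in> J \<and> j < i} = {}" using h by fastforce
  show ?thesis by (simp only: wsign_def e card.empty power_0)
qed

definition P2 :: "nat \<Rightarrow> nat set" where "P2 i = {2*i - 1, 2*i}"

lemma finite_P2 [simp]: "finite (P2 i)" by (simp add: P2_def)

lemma chi_bvec: "i \<ge> 1 \<Longrightarrow> wedge (dx (2*i - 1)) (dx (2*i)) = bvec (P2 i)"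
proof -
  assume "i \<ge> 1"
  have "wsign {2*i-1} {2*i} = 1" by (rule wsign_empty) (use \<open>i \<ge> 1\<close> in auto)
  then show ?thesis unfolding dx_bvec P2_def using \<open>i \<ge> 1\<close>
    by (subst wedge_bvec) (auto simp: fsmult_def insert_commute)
qed

lemma wedges_blocks:
  fixes c :: "nat \<Rightarrow> real"
  assumes "a \<ge> 1"
  shows "wedges (map (\<lambda>j. fsmult (c j) (bvec (P2 j))) (filter (\<lambda>j. j \<noteq> i) [a..<m+1]))
       = fsmult (\<Prod>j\<in>{a..m}-{i}. c j) (bvec (\<Union>j\<in>{a..m}-{i}. P2 j))"
  using assms
proof (induction "m + 1 - a" arbitrary: a)
  case 0
  then have "[a..<m+1] = []" "{a..m} = {}" by auto
  then show ?case by (simp add: wedges_def fone_bvec fsmult_def)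
next
  case (Suc d)
  then have am0: "a \<le> m" by auto
  have ups: "[a..<m+1] = a # [Suc a..<m+1]" by (rule upt_conv_Cons) (use am0 in simp)
  have IH: "wedges (map (\<lambda>j. fsmult (c j) (bvec (P2 j))) (filter (\<lambda>j. j \<noteq> i) [Suc a..<m+1]))
       = fsmult (\<Prod>j\<in>{Suc a..m}-{i}. c j) (bvec (\<Union>j\<in>{Suc a..m}-{i}. P2 j))"
    using Suc by auto
  have am: "a \<le> m" using Suc by auto
  show ?case
  proof (cases "a = i")
    case True
    have "{a..m} - {i} = {Suc a..m} - {i}" using True by auto
    then show ?thesis using True ups IH by simp
  next
    case False
    have set: "{a..m} - {i} = insert a ({Suc a..m} - {i})" using False am by auto
    let ?Q = "\<Union>j\<in>{Suc a..m}-{i}. P2 j"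
    have Qgt: "\<And>q. q \<in> ?Q \<Longrightarrow> q > 2*a" by (auto simp: P2_def)
    have fin: "finite ?Q" by (auto simp: P2_def)
    have disj: "P2 a \<inter> ?Q = {}" using Qgt by (auto simp: P2_def)
    have ws: "wsign (P2 a) ?Q = 1"
      by (rule wsign_empty) (use Qgt in \<open>auto simp: P2_def\<close>)
    have "wedges (map (\<lambda>j. fsmult (c j) (bvec (P2 j))) (filter (\<lambda>j. j \<noteq> i) [a..<m+1]))
        = wedge (fsmult (c a) (bvec (P2 a))) (fsmult (\<Prod>j\<in>{Suc a..m}-{i}. c j) (bvec ?Q))"
      using ups False IH by (simp add: wedges_def)
    also have "\<dots> = fsmult (c a * (\<Prod>j\<in>{Suc a..m}-{i}. c j)) (bvec (P2 a \<union> ?Q))"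
      using disj ws fin by (simp add: wedge_fsmult_left wedge_fsmult_right wedge_bvec fsmult_fsmult mult.commute)
    also have "\<dots> = fsmult (\<Prod>j\<in>{a..m}-{i}. c j) (bvec (\<Union>j\<in>{a..m}-{i}. P2 j))"
      using set by simp
    finally show ?thesis .
  qed
qed


lemma sum_sel:
  assumes "finite S" "inj_on T S"
  shows "(\<Sum>i\<in>S. f i * (if L = T i then 1 else 0)) = (if L \<in> T ` S then f (inv_into S T L) else (0::real))"
proof (cases "L \<in> T ` S")
  case True
  then obtain j where j: "j \<in> S" "L = T j" by auto
  have "(\<Sum>i\<in>S. f i * (if L = T i then 1 else 0)) = (\<Sum>i\<in>S. if i = j then f j else 0)"
    using assms(2) j by (intro sum.cong) (auto simp: inj_on_def)
  also have "\<dots> = f j" using j assms by simp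
  finally show ?thesis using True j assms by (simp add: inv_into_f_f)
next
  case False
  then show ?thesis by (auto intro!: sum.neutral)
qed

lemma P2_inj: "inj_on P2 {1..m}"
  by (auto simp: inj_on_def P2_def doubleton_eq_iff)

lemma P2_sub: "i \<in> {1..m} \<Longrightarrow> P2 i \<subseteq> {1..2*m}"
  by (auto simp: P2_def)

lemma P2_meet: "i \<ge> 1 \<Longrightarrow> j \<ge> 1 \<Longrightarrow> k \<in> P2 i \<Longrightarrow> k \<in> P2 j \<Longrightarrow> i = j"
  by (auto simp: P2_def)

lemma P2_cover: "k \<in> {1..2*m} \<Longrightarrow> (k + 1) div 2 \<in> {1..m} \<and> k \<in> P2 ((k+1) div 2)"
  by (auto simp: P2_def)

definition Kc :: "nat \<Rightarrow> nat \<Rightarrow> nat set" where "Kc m i = {1..2*m} - P2 i"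

lemma Kc_inj: "inj_on (Kc m) {1..m}"
proof (rule inj_onI)
  fix i j assume ij: "i \<in> {1..m}" "j \<in> {1..m}" "Kc m i = Kc m j"
  have "P2 i = {1..2*m} - Kc m i" using P2_sub[OF ij(1)] unfolding Kc_def by blast
  also have "\<dots> = P2 j" using P2_sub[OF ij(2)] ij(3) unfolding Kc_def by blast
  finally show "i = j" using P2_inj[of m] ij unfolding inj_on_def by blast
qed

lemma union_Kc: "i \<in> {1..m} \<Longrightarrow> (\<Union>j\<in>{1..m}-{i}. P2 j) = Kc m i"
proof (intro equalityI subsetI)
  fix k assume i: "i \<in> {1..m}" and "k \<in> (\<Union>j\<in>{1..m}-{i}. P2 j)"
  then obtain j where j: "j \<in> {1..m}" "j \<noteq> i" "k \<in> P2 j" by blast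
  have "k \<notin> P2 i"
  proof
    assume "k \<in> P2 i"
    then have "j = i" using P2_meet[of j i k] j i by auto
    with j(2) show False by simp
  qed
  then show "k \<in> Kc m i" using P2_sub[OF j(1)] j unfolding Kc_def by blast
next
  fix k assume i: "i \<in> {1..m}" and k: "k \<in> Kc m i"
  then have k2: "k \<in> {1..2*m}" "k \<notin> P2 i" unfolding Kc_def by blast+
  have "(k+1) div 2 \<noteq> i" using P2_cover[OF k2(1)] k2(2) by metis
  then show "k \<in> (\<Union>j\<in>{1..m}-{i}. P2 j)" using P2_cover[OF k2(1)] by blast
qed

lemma fsmult_bvec_apply: "fsmult c (bvec K) L = c * (if L = K then 1 else 0)"
  by (simp add: fsmult_def bvec_def)

lemma sigma_formula:
  assumes "\<And>i x. i \<in> {1..m} \<Longrightarrow> \<sigma>i i x = fsmult (\<psi> i x) (wedge (dx (2*i - 1)) (dx (2*i)))"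
  shows "(\<Sum>i\<in>{1..m}. \<sigma>i i x) L = (if L \<in> P2 ` {1..m} then \<psi> (inv_into {1..m} P2 L) x else 0)"
proof -
  have "(\<Sum>i\<in>{1..m}. \<sigma>i i x) L = (\<Sum>i\<in>{1..m}. \<psi> i x * (if L = P2 i then 1 else 0))"
    unfolding fun_sum_apply
  proof (intro sum.cong refl)
    fix j :: nat assume "j \<in> {1..m}"
    then show "\<sigma>i j x L = \<psi> j x * (if L = P2 j then 1 else 0)"
      using chi_bvec[of j] by (simp add: assms fsmult_bvec_apply)
  qed
  also have "\<dots> = (if L \<in> P2 ` {1..m} then \<psi> (inv_into {1..m} P2 L) x else 0)"
    by (rule sum_sel[OF _ P2_inj]) simp
  finally show ?thesis .
qed

lemma zeta_formula:
  assumes "\<And>i x. i \<in> {1..m} \<Longrightarrow> \<sigma>i i x = fsmult (\<psi> i x) (wedge (dx (2*i - 1)) (dx (2*i)))"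
  shows "(\<Sum>i\<in>{1..m}. - wedges (map (\<lambda>j. \<sigma>i j x) (filter (\<lambda>j. j \<noteq> i) [1..<m+1]))) L
     = (if L \<in> Kc m ` {1..m} then - (\<Prod>j\<in>{1..m}-{inv_into {1..m} (Kc m) L}. \<psi> j x) else 0)"
proof -
  have w: "wedges (map (\<lambda>j. \<sigma>i j x) (filter (\<lambda>j. j \<noteq> i) [1..<m+1]))
      = fsmult (\<Prod>j\<in>{1..m}-{i}. \<psi> j x) (bvec (Kc m i))" if i: "i \<in> {1..m}" for i
  proof -
    have mapeq: "map (\<lambda>j. \<sigma>i j x) (filter (\<lambda>j. j \<noteq> i) [1..<m+1])
        = map (\<lambda>j. fsmult (\<psi> j x) (bvec (P2 j))) (filter (\<lambda>j. j \<noteq> i) [1..<m+1])"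
    proof (intro map_cong refl)
      fix j assume "j \<in> set (filter (\<lambda>j. j \<noteq> i) [1..<m+1])"
      then have "j \<in> {1..m}" by auto
      then show "\<sigma>i j x = fsmult (\<psi> j x) (bvec (P2 j))" using chi_bvec[of j] by (simp add: assms)
    qed
    show ?thesis by (simp only: mapeq wedges_blocks[of 1 "\<lambda>j. \<psi> j x" i m, OF order_refl] union_Kc[OF i])
  qed
  have "(\<Sum>i\<in>{1..m}. - wedges (map (\<lambda>j. \<sigma>i j x) (filter (\<lambda>j. j \<noteq> i) [1..<m+1]))) L
      = (\<Sum>i\<in>{1..m}. (- (\<Prod>j\<in>{1..m}-{i}. \<psi> j x)) * (if L = Kc m i then 1 else 0))"
    unfolding fun_sum_apply
  proof (intro sum.cong refl)
    fix i assume i: "i \<in> {1..m}"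
    show "(- wedges (map (\<lambda>j. \<sigma>i j x) (filter (\<lambda>j. j \<noteq> i) [1..<m+1]))) L
        = (- (\<Prod>j\<in>{1..m}-{i}. \<psi> j x)) * (if L = Kc m i then 1 else 0)"
      by (simp only: w[OF i] fun_uminus_apply fsmult_bvec_apply mult_minus_left)
  qed
  also have "\<dots> = (if L \<in> Kc m ` {1..m} then - (\<Prod>j\<in>{1..m}-{inv_into {1..m} (Kc m) L}. \<psi> j x) else 0)"
    by (rule sum_sel[OF _ Kc_inj, where f = "\<lambda>i. - (\<Prod>j\<in>{1..m}-{i}. \<psi> j x)"]) simp
  finally show ?thesis .
qed


lemma P2_other: "i \<ge> 1 \<Longrightarrow> k0 \<in> P2 i \<Longrightarrow> \<exists>ko. ko \<in> P2 i \<and> ko \<noteq> k0"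
proof -
  assume i: "i \<ge> 1" and k0: "k0 \<in> P2 i"
  show ?thesis
  proof (cases "k0 = 2*i")
    case True
    then show ?thesis using i by (intro exI[of _ "2*i - 1"]) (simp add: P2_def)
  next
    case False
    then show ?thesis by (intro exI[of _ "2*i"]) (simp add: P2_def)
  qed
qed

lemma Kmiss:
  assumes i: "i \<in> {1..m}" and j: "j \<in> {1..m}" and k0: "k0 \<in> P2 i" and k': "k' \<in> Kc m i"
  shows "insert k0 (Kc m i) - {k'} \<noteq> Kc m j"
proof
  assume eq: "insert k0 (Kc m i) - {k'} = Kc m j"
  obtain ko where ko: "ko \<in> P2 i" "ko \<noteq> k0" using P2_other[of i k0] i k0 by auto
  have ko2: "ko \<in> {1..2*m}" using P2_sub[OF i] ko by blast
  have "ko \<notin> Kc m j" using eq ko unfolding Kc_def by blast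
  then have "ko \<in> P2 j" using ko2 unfolding Kc_def by blast
  then have "i = j" using P2_meet[of i j ko] i j ko by simp
  have "k0 \<noteq> k'" using k0 k' unfolding Kc_def by blast
  then have "k0 \<in> Kc m j" using eq by blast
  then show False using \<open>i = j\<close> k0 unfolding Kc_def by blast
qed

lemma Kself: "k0 \<in> P2 i \<Longrightarrow> insert k0 (Kc m i) - {k0} = Kc m i"
  unfolding Kc_def by blast

lemma Pmiss:
  assumes i: "i \<in> {1..m}" and j: "j \<in> {1..m}" and k: "k \<notin> P2 i" and k': "k' \<in> P2 i"
  shows "insert k (P2 i) - {k'} \<noteq> P2 j"
proof
  assume eq: "insert k (P2 i) - {k'} = P2 j"
  obtain ko where ko: "ko \<in> P2 i" "ko \<noteq> k'" using P2_other[of i k'] i k' by auto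
  have "ko \<in> P2 j" using eq ko by blast
  then have "i = j" using P2_meet[of i j ko] i j ko by simp
  have "k \<in> P2 j" using eq k k' by blast
  then show False using \<open>i = j\<close> k by simp
qed

lemma Pself: "k \<notin> P2 i \<Longrightarrow> insert k (P2 i) - {k} = P2 i"
  by auto

lemma pderiv_zero [simp]: "pderiv k (\<lambda>y. 0) x = 0"
  by (simp add: pderiv_def)

lemma coef_fun:
  assumes "\<And>y. w y L = (if L \<in> T ` S then f (inv_into S T L) y else 0)"
  shows "(\<lambda>y. w y L) = (if L \<in> T ` S then f (inv_into S T L) else (\<lambda>y. 0))"
  using assms by auto

lemma dform_zero:
  assumes w: "\<And>y L. w y L = (if L \<in> T ` S then f (inv_into S T L) y else 0)"
    and inj: "inj_on T S"
    and h: "\<And>k j. k \<in> K \<Longrightarrow> j \<in> S \<Longrightarrow> K - {k} = T j \<Longrightarrow> pderiv k (f j) x = 0"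
  shows "dform w x K = 0"
  unfolding dform_def
proof (rule sum.neutral, rule ballI)
  fix k assume k: "k \<in> K"
  have "pderiv k (\<lambda>y. w y (K - {k})) x = 0"
  proof (cases "K - {k} \<in> T ` S")
    case True
    then obtain j where j: "j \<in> S" "K - {k} = T j" by auto
    then have "inv_into S T (K - {k}) = j" using inj by (simp add: inv_into_f_f)
    then show ?thesis using coef_fun[of w "K - {k}" T S f, OF w] True h[OF k j] j by simp
  next
    case False
    then show ?thesis using coef_fun[of w "K - {k}" T S f, OF w] by simp
  qed
  then show "(-1) ^ card {i \<in> K. i < k} * pderiv k (\<lambda>y. w y (K - {k})) x = 0" by simp
qed

lemma dform_single:
  assumes w: "\<And>y L. w y L = (if L \<in> T ` S then f (inv_into S T L) y else 0)"
    and inj: "inj_on T S" and fin: "finite K"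
    and k: "k \<in> K" and j: "j \<in> S" and kj: "K - {k} = T j"
    and others: "\<And>k'. k' \<in> K \<Longrightarrow> k' \<noteq> k \<Longrightarrow> K - {k'} \<notin> T ` S"
    and d0: "dform w x K = 0"
  shows "pderiv k (f j) x = 0"
proof -
  have inv: "inv_into S T (K - {k}) = j" using inj j kj by (simp add: inv_into_f_f)
  have fk: "(\<lambda>y. w y (K - {k})) = f j"
    using coef_fun[of w "K - {k}" T S f, OF w] inv j kj by simp
  have rest: "(\<Sum>k'\<in>K - {k}. (-1) ^ card {i \<in> K. i < k'} * pderiv k' (\<lambda>y. w y (K - {k'})) x) = 0"
  proof (rule sum.neutral, rule ballI)
    fix k' assume "k' \<in> K - {k}"
    then have "(\<lambda>y. w y (K - {k'})) = (\<lambda>y. 0)"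
      using coef_fun[of w "K - {k'}" T S f, OF w] others[of k'] by auto
    then show "(-1) ^ card {i \<in> K. i < k'} * pderiv k' (\<lambda>y. w y (K - {k'})) x = 0" by simp
  qed
  have "dform w x K = (-1) ^ card {i \<in> K. i < k} * pderiv k (\<lambda>y. w y (K - {k})) x
     + (\<Sum>k'\<in>K - {k}. (-1) ^ card {i \<in> K. i < k'} * pderiv k' (\<lambda>y. w y (K - {k'})) x)"
    unfolding dform_def by (rule sum.remove[OF fin k])
  then have "0 = (-1) ^ card {i \<in> K. i < k} * pderiv k (f j) x" using rest fk d0 by simp
  then show ?thesis by simp
qed



lemma prod_psi_alg:
  fixes a :: "nat \<Rightarrow> real"
  assumes fin: "finite S" and i: "i \<in> S" and cS: "card S = m" and pos: "\<And>l. l \<in> S \<Longrightarrow> a l > 0"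
  shows "(\<Prod>j\<in>S-{i}. a j powr (1 - real m) * (\<Prod>l\<in>S. a l)) = a i ^ (m - 1)"
proof -
  define Q where "Q = (\<Prod>j\<in>S-{i}. a j)"
  have Qpos: "Q > 0" unfolding Q_def using pos by (intro prod_pos) auto
  have c: "card (S - {i}) = m - 1" using cS i fin by simp
  have P: "(\<Prod>l\<in>S. a l) = a i * Q" unfolding Q_def using prod.remove[OF fin i] by simp
  have "(\<Prod>j\<in>S-{i}. a j powr (1 - real m) * (\<Prod>l\<in>S. a l))
      = (\<Prod>j\<in>S-{i}. a j powr (1 - real m)) * (a i * Q) ^ (m - 1)"
    by (simp add: prod.distrib c P)
  also have "(\<Prod>j\<in>S-{i}. a j powr (1 - real m)) = Q powr (1 - real m)"
    unfolding Q_def by (simp add: prod_powr_distrib)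
  also have "Q powr (1 - real m) * (a i * Q) ^ (m - 1) = a i ^ (m - 1) * (Q powr (1 - real m) * Q ^ (m - 1))"
    by (simp add: power_mult_distrib)
  also have "Q ^ (m - 1) = Q powr real (m - 1)" using Qpos by (simp add: powr_realpow)
  also have "Q powr (1 - real m) * Q powr real (m - 1) = Q powr ((1 - real m) + real (m - 1))"
    by (simp add: powr_add)
  also have "(1 - real m) + real (m - 1) = 0" using cS i fin
    by (cases m) (auto simp: card_gt_0_iff)
  finally show ?thesis using Qpos by simp
qed

lemma prod_rho_alg:
  fixes a r :: "nat \<Rightarrow> real"
  assumes fin: "finite S" and i: "i \<in> S" and cS: "card S = m" and m2: "m \<ge> 2"
    and ar: "\<And>j. j \<in> S \<Longrightarrow> a j = (\<Prod>l\<in>S-{j}. r l)"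
    and pos: "\<And>l. l \<in> S \<Longrightarrow> a l > 0"
  shows "a i powr (1 - real m) * (\<Prod>j\<in>S. a j) = r i ^ (m - 1)"
proof -
  define R where "R = (\<Prod>l\<in>S. r l)"
  have aR: "a j * r j = R" if "j \<in> S" for j
    using prod.remove[OF fin that, of r] ar[OF that] by (simp add: R_def mult.commute)
  obtain j where j: "j \<in> S" "j \<noteq> i"
  proof -
    have "card (S - {i}) \<ge> 1" using cS m2 i fin by simp
    then have "S - {i} \<noteq> {}" by (metis card.empty not_one_le_zero)
    then show ?thesis using that by auto
  qed
  have ri: "r i \<noteq> 0"
  proof
    assume "r i = 0"
    moreover have "i \<in> S - {j}" using i j by simp
    ultimately have "prod r (S - {j}) = 0" using fin by (subst prod_zero_iff) auto
    then have "a j = 0" using ar[OF j(1)] by simp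
    then show False using pos[OF j(1)] by simp
  qed
  have Rnz: "R \<noteq> 0" using aR[OF i] pos[OF i] ri by auto
  have A: "(\<Prod>j\<in>S. a j) * R = R ^ m"
  proof -
    have "(\<Prod>j\<in>S. a j) * R = (\<Prod>j\<in>S. a j) * (\<Prod>j\<in>S. r j)" by (simp add: R_def)
    also have "\<dots> = (\<Prod>j\<in>S. a j * r j)" by (simp add: prod.distrib)
    also have "\<dots> = (\<Prod>j\<in>S. R)" using aR by (intro prod.cong) auto
    finally show ?thesis using cS by simp
  qed
  have "R ^ m = R ^ (m - 1) * R"
    using m2 by (cases m) (auto simp: mult.commute)
  then have "(\<Prod>j\<in>S. a j) * R = R ^ (m - 1) * R" using A by simp
  then have B: "(\<Prod>j\<in>S. a j) = R ^ (m - 1)"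
    using Rnz by simp
  have ai: "a i powr (1 - real m) = inverse (a i ^ (m - 1))"
  proof -
    have e: "1 - real m = - real (m - 1)" using m2 by (simp add: of_nat_diff)
    show ?thesis by (simp only: e powr_minus powr_realpow[OF pos[OF i]])
  qed
  have "a i powr (1 - real m) * (\<Prod>j\<in>S. a j) = (R / a i) ^ (m - 1)"
    unfolding ai B power_divide by (simp add: divide_inverse mult.commute)
  also have "R / a i = r i" using aR[OF i] pos[OF i] by (auto simp: field_simps)
  finally show ?thesis .
qed



lemma Rn_upd: "x \<in> Rn n \<Longrightarrow> k \<in> {1..n} \<Longrightarrow> x(k := t) \<in> Rn n"
  by (auto simp: Rn_def)

lemma line_nbhd:
  assumes U: "open_Rn n U" and x: "x \<in> U" and k: "k \<in> {1..n}"
  shows "eventually (\<lambda>t. x(k := t) \<in> U) (nhds (x k))"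
proof -
  have sub: "U \<subseteq> Rn n" and op: "openin (top_of_set (Rn n)) U" using U by (auto simp: open_Rn_def)
  obtain T where T: "open T" "U = Rn n \<inter> T" using op by (auto simp: openin_open)
  have cont: "continuous_on UNIV (\<lambda>t::real. x(k := t))"
  proof (intro continuous_on_coordinatewise_then_product)
    fix i show "continuous_on UNIV (\<lambda>t::real. (x(k := t)) i)"
      by (cases "i = k") (auto intro: continuous_intros)
  qed
  have "open ((\<lambda>t::real. x(k := t)) -` T)" by (rule open_vimage[OF T(1) cont])
  moreover have "x k \<in> (\<lambda>t::real. x(k := t)) -` T" using x T by auto
  ultimately have "eventually (\<lambda>t. t \<in> (\<lambda>t::real. x(k := t)) -` T) (nhds (x k))"
    by (rule eventually_nhds_in_open)
  then show ?thesis
  proof (rule eventually_mono)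
    fix t assume "t \<in> (\<lambda>t::real. x(k := t)) -` T"
    moreover have "x(k := t) \<in> Rn n" using Rn_upd[OF _ k] x sub by auto
    ultimately show "x(k := t) \<in> U" using T by auto
  qed
qed

lemma box_in:
  assumes U: "open_Rn n U" and p: "p \<in> U"
  shows "\<exists>\<epsilon>>0. \<forall>y\<in>Rn n. (\<forall>k\<in>{1..n}. \<bar>y k - p k\<bar> < \<epsilon>) \<longrightarrow> y \<in> U"
proof -
  have sub: "U \<subseteq> Rn n" and op: "openin (top_of_set (Rn n)) U" using U by (auto simp: open_Rn_def)
  obtain T where T: "open T" "U = Rn n \<inter> T" using op by (auto simp: openin_open)
  have "openin (product_topology (\<lambda>i. euclidean) UNIV) T" using T(1) by (simp add: open_fun_def)
  from product_topology_open_contains_basis[OF this, of p] p T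
  obtain X where X: "p \<in> (\<Pi>\<^sub>E i\<in>UNIV. X i)" "\<And>i. open (X i)" "(\<Pi>\<^sub>E i\<in>UNIV. X i) \<subseteq> T"
    by auto
  have "\<forall>k. \<exists>e>0. ball (p k) e \<subseteq> X k"
    using X(1,2) by (auto simp: open_contains_ball)
  then obtain e where e: "\<And>k. e k > 0" "\<And>k. ball (p k) (e k) \<subseteq> X k" by metis
  define \<epsilon> where "\<epsilon> = Min (insert 1 (e ` {1..n}))"
  have epos: "\<epsilon> > 0" unfolding \<epsilon>_def using e(1) by (subst Min_gr_iff) auto
  have ele: "\<epsilon> \<le> e k" if "k \<in> {1..n}" for k unfolding \<epsilon>_def using that by (intro Min_le) auto
  have "\<forall>y\<in>Rn n. (\<forall>k\<in>{1..n}. \<bar>y k - p k\<bar> < \<epsilon>) \<longrightarrow> y \<in> U"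
  proof (intro ballI impI)
    fix y assume y: "y \<in> Rn n" "\<forall>k\<in>{1..n}. \<bar>y k - p k\<bar> < \<epsilon>"
    have "y i \<in> X i" for i
    proof (cases "i \<in> {1..n}")
      case True
      then have "\<bar>y i - p i\<bar> < e i" using y(2) ele[OF True] by fastforce
      then have "y i \<in> ball (p i) (e i)" by (simp add: dist_real_def abs_minus_commute)
      then show ?thesis using e(2) by blast
    next
      case False
      have "p \<in> Rn n" using p sub by auto
      then have "y i = p i" using y(1) False by (simp add: Rn_def)
      then show ?thesis using X(1) by auto
    qed
    then have "y \<in> (\<Pi>\<^sub>E i\<in>UNIV. X i)" by (simp add: PiE_UNIV_domain)
    then show "y \<in> U" using X(3) T(2) y(1) by auto
  qed
  then show ?thesis using epos by auto
qed

definition box :: "nat \<Rightarrow> (nat \<Rightarrow> real) \<Rightarrow> real \<Rightarrow> (nat \<Rightarrow> real) set" where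
  "box n p \<epsilon> = {y \<in> Rn n. \<forall>k\<in>{1..n}. \<bar>y k - p k\<bar> < \<epsilon>}"

lemma box_open: "open_Rn n (box n p \<epsilon>)"
proof -
  have "open {f::nat\<Rightarrow>real. \<forall>i\<in>{1..n}. f (id i) \<in> ball (p i) \<epsilon>}"
    by (rule product_topology_basis') auto
  moreover have "box n p \<epsilon> = Rn n \<inter> {f::nat\<Rightarrow>real. \<forall>i\<in>{1..n}. f (id i) \<in> ball (p i) \<epsilon>}"
    by (auto simp: box_def dist_real_def abs_minus_commute)
  ultimately show ?thesis unfolding open_Rn_def by (auto simp: openin_open box_def)
qed

lemma line_const:
  assumes k: "k \<in> {1..n}" and y: "y \<in> box n p \<epsilon>" and s: "\<bar>s - p k\<bar> < \<epsilon>"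
    and h: "\<And>z. z \<in> box n p \<epsilon> \<Longrightarrow> (\<lambda>t. f (z(k := t))) differentiable (at (z k)) \<and> pderiv k f z = 0"
  shows "f (y(k := s)) = f y"
proof -
  define g where "g = (\<lambda>t. f (y(k := t)))"
  have "(g has_field_derivative 0) (at t within ball (p k) \<epsilon>)" if t: "t \<in> ball (p k) \<epsilon>" for t
  proof -
    define z where "z = y(k := t)"
    have zb: "z \<in> box n p \<epsilon>"
      using y t k Rn_upd[of y n k t] by (auto simp: box_def z_def dist_real_def abs_minus_commute)
    have gz: "(\<lambda>u. f (z(k := u))) = g" by (simp add: z_def g_def)
    have zk: "z k = t" by (simp add: z_def)
    have "g differentiable (at t)" using h[OF zb] gz zk by simp
    then have "DERIV g t :> deriv g t" by (simp add: DERIV_deriv_iff_real_differentiable)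
    moreover have "deriv g t = 0" using h[OF zb] gz zk by (simp add: pderiv_def)
    ultimately show ?thesis by (simp add: has_field_derivative_at_within)
  qed
  then obtain c where c: "\<forall>t\<in>ball (p k) \<epsilon>. g t = c"
    using has_field_derivative_zero_constant[of "ball (p k) \<epsilon>" g] by auto
  have "y k \<in> ball (p k) \<epsilon>" "s \<in> ball (p k) \<epsilon>"
    using y k s by (auto simp: box_def dist_real_def abs_minus_commute)
  then have "g s = g (y k)" using c by simp
  then show ?thesis by (simp add: g_def)
qed

lemma multi_const:
  assumes fin: "finite C" and C: "C \<subseteq> {1..n}" and p: "p \<in> Rn n" and e: "\<epsilon> > 0"
    and h: "\<And>k z. k \<in> C \<Longrightarrow> z \<in> box n p \<epsilon> \<Longrightarrow> (\<lambda>t. f (z(k := t))) differentiable (at (z k)) \<and> pderiv k f z = 0"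
  shows "y \<in> box n p \<epsilon> \<Longrightarrow> f (\<lambda>l. if l \<in> C then p l else y l) = f y"
  using fin C h
proof (induction C arbitrary: y rule: finite_induct)
  case empty
  then show ?case by simp
next
  case (insert c C)
  define z where "z = (\<lambda>l. if l \<in> C then p l else y l)"
  have zb: "z \<in> box n p \<epsilon>"
    using insert.prems(1) p e by (auto simp: box_def z_def Rn_def)
  have eq: "(\<lambda>l. if l \<in> insert c C then p l else y l) = z(c := p c)"
    by (auto simp: z_def)
  have "f (z(c := p c)) = f z"
    using insert.prems insert.hyps e by (intro line_const[OF _ zb, of c]) auto
  also have "f z = f y" unfolding z_def using insert by auto
  finally show ?case using eq by simp
qed



definition diag :: "(nat \<Rightarrow> real) \<Rightarrow> nat \<Rightarrow> nat \<Rightarrow> real" where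
  "diag d = (\<lambda>a b. if a = b then d a else 0)"

lemma lin_diag: "k \<in> {1..n} \<Longrightarrow> lin n (diag d) k = fsmult (d k) (dx k)"
proof
  fix L assume k: "k \<in> {1..n}"
  have "lin n (diag d) k L = (\<Sum>j\<in>{1..n}. if j = k then d k * dx k L else 0)"
    unfolding lin_def fun_sum_apply by (intro sum.cong refl) (auto simp: fsmult_def diag_def)
  also have "\<dots> = d k * dx k L" using k by simp
  finally show "lin n (diag d) k L = fsmult (d k) (dx k) L" by (simp add: fsmult_def)
qed

lemma fsmult_one: "fsmult 1 w = w" by (simp add: fsmult_def)

lemma wedges_diag:
  "sorted_wrt (<) xs \<Longrightarrow> set xs \<subseteq> {1..n} \<Longrightarrow>
   wedges (map (lin n (diag d)) xs) = fsmult (\<Prod>k\<in>set xs. d k) (bvec (set xs))"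
proof (induction xs)
  case Nil
  then show ?case by (simp add: wedges_def fone_bvec fsmult_one)
next
  case (Cons x xs)
  have IH: "wedges (map (lin n (diag d)) xs) = fsmult (\<Prod>k\<in>set xs. d k) (bvec (set xs))"
    using Cons by simp
  have xn: "x \<in> {1..n}" using Cons.prems by simp
  have gt: "\<And>y. y \<in> set xs \<Longrightarrow> x < y" using Cons.prems(1) by simp
  then have xnot: "x \<notin> set xs" by blast
  have ws: "wsign {x} (set xs) = 1" by (rule wsign_empty) (use gt in auto)
  have "wedges (map (lin n (diag d)) (x # xs)) = wedge (fsmult (d x) (bvec {x})) (fsmult (\<Prod>k\<in>set xs. d k) (bvec (set xs)))"
    using IH lin_diag[OF xn] by (simp add: wedges_def dx_bvec)
  also have "\<dots> = fsmult (d x * (\<Prod>k\<in>set xs. d k)) (bvec (insert x (set xs)))"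
    using xnot ws by (simp add: wedge_fsmult_left wedge_fsmult_right wedge_bvec fsmult_fsmult mult.commute)
  also have "d x * (\<Prod>k\<in>set xs. d k) = (\<Prod>k\<in>set (x # xs). d k)" using xnot by simp
  finally show ?case by simp
qed

lemma pullback_diag:
  assumes supp: "\<And>I. w I \<noteq> 0 \<Longrightarrow> I \<subseteq> {1..n}"
  shows "pullback n (diag d) w L = w L * (\<Prod>k\<in>L. d k)"
proof -
  have "pullback n (diag d) w L = (\<Sum>I\<in>Pow {1..n}. w I * (\<Prod>k\<in>I. d k) * (if L = I then 1 else 0))"
    unfolding pullback_def fun_sum_apply
  proof (intro sum.cong refl)
    fix I assume I: "I \<in> Pow {1..n}"
    then have fin: "finite I" by (auto intro: finite_subset)
    have s: "sorted_wrt (<) (sorted_list_of_set I)" using strict_sorted_list_of_set[of I] by simp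
    have "wedges (map (lin n (diag d)) (sorted_list_of_set I)) = fsmult (\<Prod>k\<in>I. d k) (bvec I)"
      using wedges_diag[OF s, of n d] fin I by simp
    then show "fsmult (w I) (wedges (map (lin n (diag d)) (sorted_list_of_set I))) L
        = w I * (\<Prod>k\<in>I. d k) * (if L = I then 1 else 0)"
      by (simp add: fsmult_def bvec_def)
  qed
  also have "\<dots> = (\<Sum>I\<in>Pow {1..n}. if I = L then w L * (\<Prod>k\<in>L. d k) else 0)"
    by (intro sum.cong refl) auto
  also have "\<dots> = (if L \<in> Pow {1..n} then w L * (\<Prod>k\<in>L. d k) else 0)"
    by (simp add: sum.delta')
  also have "\<dots> = w L * (\<Prod>k\<in>L. d k)" using supp[of L] by auto
  finally show ?thesis .
qed

lemma invertible_diag: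
  assumes nz: "\<And>k. k \<in> {1..n} \<Longrightarrow> d k \<noteq> 0"
  shows "invertible_on n (diag d)"
  unfolding invertible_on_def
proof (intro exI[of _ "diag (\<lambda>k. 1 / d k)"] ballI conjI)
  fix i j assume i: "i \<in> {1..n}" and j: "j \<in> {1..n}"
  have "(\<Sum>k\<in>{1..n}. diag d i k * diag (\<lambda>k. 1 / d k) k j) = (\<Sum>k\<in>{1..n}. if k = i then (if i = j then 1 else 0) else 0)"
    using nz[OF i] by (intro sum.cong refl) (auto simp: diag_def)
  also have "\<dots> = (if i = j then 1 else 0)" using i by simp
  finally show "(\<Sum>k\<in>{1..n}. diag d i k * diag (\<lambda>k. 1 / d k) k j) = (if i = j then 1 else 0)" .
  have "(\<Sum>k\<in>{1..n}. diag (\<lambda>k. 1 / d k) i k * diag d k j) = (\<Sum>k\<in>{1..n}. if k = i then (if i = j then 1 else 0) else 0)"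
    using nz[OF i] by (intro sum.cong refl) (auto simp: diag_def)
  also have "\<dots> = (if i = j then 1 else 0)" using i by simp
  finally show "(\<Sum>k\<in>{1..n}. diag (\<lambda>k. 1 / d k) i k * diag d k j) = (if i = j then 1 else 0)" .
qed



definition psi :: "nat \<Rightarrow> (nat \<Rightarrow> (nat \<Rightarrow> real) \<Rightarrow> real) \<Rightarrow> nat \<Rightarrow> (nat \<Rightarrow> real) \<Rightarrow> real" where
  "psi m \<phi> i y = \<phi> i y powr (1 - real m) * (\<Prod>l\<in>{1..m}. \<phi> l y)"

context
  fixes m :: nat and U :: "(nat \<Rightarrow> real) set" and \<phi> :: "nat \<Rightarrow> (nat \<Rightarrow> real) \<Rightarrow> real"
  assumes m2: "m \<ge> 2"
    and U_open: "open_Rn (2*m) U"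
    and \<phi>_pos: "\<And>i x. i \<in> {1..m} \<Longrightarrow> x \<in> U \<Longrightarrow> \<phi> i x > 0"
    and \<phi>_smooth: "\<And>i. i \<in> {1..m} \<Longrightarrow> smooth_on (2*m) U (\<phi> i)"
begin

lemma psi_pos: "i \<in> {1..m} \<Longrightarrow> y \<in> U \<Longrightarrow> psi m \<phi> i y > 0"
proof -
  assume i: "i \<in> {1..m}" and y: "y \<in> U"
  have "\<phi> i y powr (1 - real m) > 0" using \<phi>_pos[OF i y] by simp
  moreover have "(\<Prod>l\<in>{1..m}. \<phi> l y) > 0" using \<phi>_pos y by (intro prod_pos) auto
  ultimately show ?thesis unfolding psi_def by simp
qed

lemma Cprod: "i \<in> {1..m} \<Longrightarrow> y \<in> U \<Longrightarrow> (\<Prod>j\<in>{1..m}-{i}. psi m \<phi> j y) = \<phi> i y ^ (m - 1)"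
  unfolding psi_def by (rule prod_psi_alg) (auto intro: \<phi>_pos)

lemma phi_line_diff:
  assumes "l \<in> {1..m}" "y \<in> U" "k \<in> {1..2*m}"
  shows "(\<lambda>t. \<phi> l (y(k := t))) differentiable (at (y k))"
  using \<phi>_smooth[OF assms(1)] assms(2,3) unfolding smooth_on_def
  by (metis empty_subsetI empty_set ipd.simps(1))

lemma phi_line_deriv:
  assumes "l \<in> {1..m}" "y \<in> U" "k \<in> {1..2*m}"
  shows "((\<lambda>t. \<phi> l (y(k := t))) has_field_derivative pderiv k (\<phi> l) y) (at (y k))"
  using phi_line_diff[OF assms] by (simp add: pderiv_def DERIV_deriv_iff_real_differentiable)

lemma psi_line_diff:
  assumes i: "i \<in> {1..m}" and y: "y \<in> U" and k: "k \<in> {1..2*m}"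
  shows "(\<lambda>t. psi m \<phi> i (y(k := t))) differentiable (at (y k))"
proof -
  have d1: "(\<lambda>t. \<phi> i (y(k := t)) powr (1 - real m)) differentiable (at (y k))"
    using DERIV_fun_powr[OF phi_line_deriv[OF i y k], of "1 - real m"] \<phi>_pos[OF i y]
    by (auto simp: real_differentiable_def)
  have "((\<lambda>t. \<Prod>l\<in>{1..m}. \<phi> l (y(k := t))) has_derivative
        (\<lambda>h. \<Sum>l\<in>{1..m}. (pderiv k (\<phi> l) y * h) * (\<Prod>j\<in>{1..m} - {l}. \<phi> j (y(k := y k))))) (at (y k))"
    by (rule has_derivative_prod) (use phi_line_deriv[OF _ y k] in \<open>auto simp: has_field_derivative_def\<close>)
  then have d2: "(\<lambda>t. \<Prod>l\<in>{1..m}. \<phi> l (y(k := t))) differentiable (at (y k))"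
    by (rule differentiableI)
  show ?thesis unfolding psi_def using differentiable_mult[OF d1 d2] by simp
qed

lemma pd_C:
  assumes i: "i \<in> {1..m}" and x: "x \<in> U" and k: "k \<in> {1..2*m}"
  shows "pderiv k (\<lambda>y. - (\<Prod>j\<in>{1..m}-{i}. psi m \<phi> j y)) x
       = - (real (m - 1) * (pderiv k (\<phi> i) x * \<phi> i x ^ (m - 1 - Suc 0)))"
proof -
  have ev: "eventually (\<lambda>t. - (\<Prod>j\<in>{1..m}-{i}. psi m \<phi> j (x(k := t))) = - (\<phi> i (x(k := t)) ^ (m - 1))) (nhds (x k))"
    using line_nbhd[OF U_open x k]
  proof (rule eventually_mono)
    fix t assume "x(k := t) \<in> U"
    then show "- (\<Prod>j\<in>{1..m}-{i}. psi m \<phi> j (x(k := t))) = - (\<phi> i (x(k := t)) ^ (m - 1))"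
      using Cprod[OF i, of "x(k := t)"] by simp
  qed
  have "pderiv k (\<lambda>y. - (\<Prod>j\<in>{1..m}-{i}. psi m \<phi> j y)) x
      = deriv (\<lambda>t. - (\<phi> i (x(k := t)) ^ (m - 1))) (x k)"
    unfolding pderiv_def by (rule deriv_cong_ev[OF ev refl])
  also have "\<dots> = - (real (m - 1) * (pderiv k (\<phi> i) x * \<phi> i x ^ (m - 1 - Suc 0)))"
    using DERIV_minus[OF DERIV_power[OF phi_line_deriv[OF i x k], of "m - 1"]]
    by (intro DERIV_imp_deriv) simp
  finally show ?thesis .
qed

lemma pd_C_zero:
  assumes i: "i \<in> {1..m}" and x: "x \<in> U" and k: "k \<in> {1..2*m}"
  shows "pderiv k (\<lambda>y. - (\<Prod>j\<in>{1..m}-{i}. psi m \<phi> j y)) x = 0 \<longleftrightarrow> pderiv k (\<phi> i) x = 0"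
proof -
  have "real (m - 1) \<noteq> 0" using m2 by simp
  moreover have "\<phi> i x ^ (m - 1 - Suc 0) \<noteq> 0" using \<phi>_pos[OF i x] by simp
  ultimately show ?thesis unfolding pd_C[OF assms] using \<phi>_pos[OF i x] by simp
qed

lemma Kc_sub: "Kc m i \<subseteq> {1..2*m}" by (auto simp: Kc_def)

lemma part_c:
  assumes h\<sigma>: "\<And>i x. i \<in> {1..m} \<Longrightarrow> \<sigma>i i x = fsmult (psi m \<phi> i x) (wedge (dx (2*i - 1)) (dx (2*i)))"
    and h\<zeta>: "\<zeta> = (\<lambda>x. \<Sum>i\<in>{1..m}. - wedges (map (\<lambda>j. \<sigma>i j x) (filter (\<lambda>j. j \<noteq> i) [1..<m+1])))"
  shows "closed_on (2*m) U \<zeta> \<longleftrightarrow> (\<forall>i\<in>{1..m}. \<forall>x\<in>U. pderiv (2*i - 1) (\<phi> i) x = 0 \<and> pderiv (2*i) (\<phi> i) x = 0)"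
proof -
  define f where "f = (\<lambda>i y. - (\<Prod>j\<in>{1..m}-{i}. psi m \<phi> j y))"
  have coef: "\<zeta> y L = (if L \<in> Kc m ` {1..m} then f (inv_into {1..m} (Kc m) L) y else 0)" for y L
    unfolding h\<zeta> f_def using zeta_formula[of m \<sigma>i "psi m \<phi>", OF h\<sigma>] by simp
  show ?thesis
  proof
    assume cl: "closed_on (2*m) U \<zeta>"
    show "\<forall>i\<in>{1..m}. \<forall>x\<in>U. pderiv (2*i - 1) (\<phi> i) x = 0 \<and> pderiv (2*i) (\<phi> i) x = 0"
    proof (intro ballI)
      fix i x assume i: "i \<in> {1..m}" and x: "x \<in> U"
      have one: "pderiv k0 (\<phi> i) x = 0" if k0: "k0 \<in> P2 i" for k0
      proof -
        define K where "K = insert k0 (Kc m i)"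
        have k02: "k0 \<in> {1..2*m}" using P2_sub[OF i] k0 by blast
        have Ksub: "K \<subseteq> {1..2*m}" unfolding K_def using k02 Kc_sub by blast
        have fin: "finite K" unfolding K_def Kc_def by simp
        have d0: "dform \<zeta> x K = 0" using cl x Ksub by (simp add: closed_on_def)
        have "pderiv k0 (f i) x = 0"
        proof (rule dform_single[OF coef Kc_inj fin _ i _ _ d0])
          show "k0 \<in> K" by (simp add: K_def)
          show "K - {k0} = Kc m i" unfolding K_def by (rule Kself[OF k0])
          fix k' assume "k' \<in> K" "k' \<noteq> k0"
          then have k': "k' \<in> Kc m i" by (simp add: K_def)
          show "K - {k'} \<notin> Kc m ` {1..m}"
            using Kmiss[OF i _ k0 k'] unfolding K_def by blast
        qed
        then show ?thesis using pd_C_zero[OF i x k02] by (simp add: f_def)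
      qed
      show "pderiv (2*i - 1) (\<phi> i) x = 0 \<and> pderiv (2*i) (\<phi> i) x = 0"
        using one[of "2*i - 1"] one[of "2*i"] by (simp add: P2_def)
    qed
  next
    assume h: "\<forall>i\<in>{1..m}. \<forall>x\<in>U. pderiv (2*i - 1) (\<phi> i) x = 0 \<and> pderiv (2*i) (\<phi> i) x = 0"
    show "closed_on (2*m) U \<zeta>"
      unfolding closed_on_def
    proof (intro ballI allI impI)
      fix x K assume x: "x \<in> U" and K: "K \<subseteq> {1..2*m}"
      show "dform \<zeta> x K = 0"
      proof (rule dform_zero[OF coef Kc_inj])
        fix k j assume k: "k \<in> K" and j: "j \<in> {1..m}" and kj: "K - {k} = Kc m j"
        have k2: "k \<in> {1..2*m}" using k K by blast
        have "k \<notin> Kc m j" using kj by blast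
        then have "k \<in> P2 j" using k2 by (simp add: Kc_def)
        then have "pderiv k (\<phi> j) x = 0" using h j x by (auto simp: P2_def)
        then show "pderiv k (f j) x = 0" using pd_C_zero[OF j x k2] by (simp add: f_def)
      qed
    qed
  qed
qed

lemma part_d1:
  assumes h\<sigma>: "\<And>i x. i \<in> {1..m} \<Longrightarrow> \<sigma>i i x = fsmult (psi m \<phi> i x) (wedge (dx (2*i - 1)) (dx (2*i)))"
    and hs: "\<sigma> = (\<lambda>x. \<Sum>i\<in>{1..m}. \<sigma>i i x)"
  shows "closed_on (2*m) U \<sigma> \<longleftrightarrow>
     (\<forall>i\<in>{1..m}. \<forall>k\<in>{1..2*m} - {2*i - 1, 2*i}. \<forall>x\<in>U. pderiv k (psi m \<phi> i) x = 0)"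
proof -
  have coef: "\<sigma> y L = (if L \<in> P2 ` {1..m} then psi m \<phi> (inv_into {1..m} P2 L) y else 0)" for y L
    unfolding hs using sigma_formula[of m \<sigma>i "psi m \<phi>", OF h\<sigma>] by simp
  show ?thesis
  proof
    assume cl: "closed_on (2*m) U \<sigma>"
    show "\<forall>i\<in>{1..m}. \<forall>k\<in>{1..2*m} - {2*i - 1, 2*i}. \<forall>x\<in>U. pderiv k (psi m \<phi> i) x = 0"
    proof (intro ballI)
      fix i k x assume i: "i \<in> {1..m}" and k: "k \<in> {1..2*m} - {2*i - 1, 2*i}" and x: "x \<in> U"
      have kP: "k \<notin> P2 i" using k by (simp add: P2_def)
      define K where "K = insert k (P2 i)"
      have Ksub: "K \<subseteq> {1..2*m}" unfolding K_def using k P2_sub[OF i] by blast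
      have fin: "finite K" unfolding K_def by simp
      have d0: "dform \<sigma> x K = 0" using cl x Ksub by (simp add: closed_on_def)
      show "pderiv k (psi m \<phi> i) x = 0"
      proof (rule dform_single[OF coef P2_inj fin _ i _ _ d0])
        show "k \<in> K" by (simp add: K_def)
        show "K - {k} = P2 i" unfolding K_def by (rule Pself[OF kP])
        fix k' assume "k' \<in> K" "k' \<noteq> k"
        then have k': "k' \<in> P2 i" by (simp add: K_def)
        show "K - {k'} \<notin> P2 ` {1..m}"
          using Pmiss[OF i _ kP k'] unfolding K_def by blast
      qed
    qed
  next
    assume h: "\<forall>i\<in>{1..m}. \<forall>k\<in>{1..2*m} - {2*i - 1, 2*i}. \<forall>x\<in>U. pderiv k (psi m \<phi> i) x = 0"
    show "closed_on (2*m) U \<sigma>"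
      unfolding closed_on_def
    proof (intro ballI allI impI)
      fix x K assume x: "x \<in> U" and K: "K \<subseteq> {1..2*m}"
      show "dform \<sigma> x K = 0"
      proof (rule dform_zero[OF coef P2_inj])
        fix k j assume k: "k \<in> K" and j: "j \<in> {1..m}" and kj: "K - {k} = P2 j"
        have k2: "k \<in> {1..2*m}" using k K by blast
        have "k \<notin> P2 j" using kj by blast
        then have "k \<in> {1..2*m} - {2*j - 1, 2*j}" using k2 by (simp add: P2_def)
        then show "pderiv k (psi m \<phi> j) x = 0" using h j x by blast
      qed
    qed
  qed
qed

lemma U_Rn: "U \<subseteq> Rn (2*m)" using U_open by (simp add: open_Rn_def)

lemma override_pair:
  assumes x: "x \<in> Rn n" and p: "p \<in> Rn n"
  shows "(\<lambda>l. if l \<in> {1..n} - {a, b} then p l else x l) = p(a := x a, b := x b)"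
proof
  fix l
  show "(if l \<in> {1..n} - {a, b} then p l else x l) = (p(a := x a, b := x b)) l"
  proof (cases "l = a \<or> l = b")
    case True then show ?thesis by auto
  next
    case False
    show ?thesis
    proof (cases "l \<in> {1..n}")
      case True then show ?thesis using False by simp
    next
      case nl: False
      then have "x l = 0" "p l = 0" using x p by (auto simp: Rn_def)
      then show ?thesis using False nl by simp
    qed
  qed
qed

lemma part_d2:
  "(\<forall>i\<in>{1..m}. \<forall>k\<in>{1..2*m} - {2*i - 1, 2*i}. \<forall>x\<in>U. pderiv k (psi m \<phi> i) x = 0) \<longleftrightarrow>
   (\<forall>p\<in>U. \<exists>V. open_Rn (2*m) V \<and> p \<in> V \<and> V \<subseteq> U \<and>
      (\<exists>\<rho> :: nat \<Rightarrow> real \<Rightarrow> real \<Rightarrow> real. \<forall>i\<in>{1..m}. \<forall>x\<in>V.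
         \<phi> i x = (\<Prod>j\<in>{1..m} - {i}. \<rho> j (x (2*j - 1)) (x (2*j)))))"
proof
  assume h: "\<forall>i\<in>{1..m}. \<forall>k\<in>{1..2*m} - {2*i - 1, 2*i}. \<forall>x\<in>U. pderiv k (psi m \<phi> i) x = 0"
  show "\<forall>p\<in>U. \<exists>V. open_Rn (2*m) V \<and> p \<in> V \<and> V \<subseteq> U \<and>
      (\<exists>\<rho> :: nat \<Rightarrow> real \<Rightarrow> real \<Rightarrow> real. \<forall>i\<in>{1..m}. \<forall>x\<in>V.
         \<phi> i x = (\<Prod>j\<in>{1..m} - {i}. \<rho> j (x (2*j - 1)) (x (2*j))))"
  proof
    fix p assume p: "p \<in> U"
    have pR: "p \<in> Rn (2*m)" using p U_Rn by blast
    obtain \<epsilon> where e: "\<epsilon> > 0" and eU: "\<forall>y\<in>Rn (2*m). (\<forall>k\<in>{1..2*m}. \<bar>y k - p k\<bar> < \<epsilon>) \<longrightarrow> y \<in> U"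
      using box_in[OF U_open p] by blast
    define V where "V = box (2*m) p \<epsilon>"
    have VU: "V \<subseteq> U" using eU by (auto simp: V_def box_def)
    have pV: "p \<in> V" using pR e by (simp add: V_def box_def)
    define \<rho> where "\<rho> = (\<lambda>j a b. psi m \<phi> j (p(2*j - 1 := a, 2*j := b)) powr (1 / real (m - 1)))"
    have rho_eq: "\<rho> j (x (2*j - 1)) (x (2*j)) = psi m \<phi> j x powr (1 / real (m - 1))"
      if j: "j \<in> {1..m}" and x: "x \<in> V" for j x
    proof -
      have xR: "x \<in> Rn (2*m)" using x by (simp add: V_def box_def)
      have "psi m \<phi> j (\<lambda>l. if l \<in> {1..2*m} - {2*j - 1, 2*j} then p l else x l) = psi m \<phi> j x"
      proof (rule multi_const[OF _ _ pR e, of "{1..2*m} - {2*j - 1, 2*j}"])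
        show "x \<in> box (2*m) p \<epsilon>" using x by (simp add: V_def)
        fix k z assume k: "k \<in> {1..2*m} - {2*j - 1, 2*j}" and z: "z \<in> box (2*m) p \<epsilon>"
        have zU: "z \<in> U" using z VU by (auto simp: V_def)
        show "(\<lambda>t. psi m \<phi> j (z(k := t))) differentiable (at (z k)) \<and> pderiv k (psi m \<phi> j) z = 0"
          using psi_line_diff[OF j zU] k h j zU by blast
      qed auto
      then have "psi m \<phi> j (p(2*j - 1 := x (2*j - 1), 2*j := x (2*j))) = psi m \<phi> j x"
        using override_pair[OF xR pR, of "2*j - 1" "2*j"] by simp
      then show ?thesis by (simp add: \<rho>_def)
    qed
    have "\<forall>i\<in>{1..m}. \<forall>x\<in>V. \<phi> i x = (\<Prod>j\<in>{1..m} - {i}. \<rho> j (x (2*j - 1)) (x (2*j)))"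
    proof (intro ballI)
      fix i x assume i: "i \<in> {1..m}" and x: "x \<in> V"
      have xU: "x \<in> U" using x VU by blast
      have "(\<Prod>j\<in>{1..m} - {i}. \<rho> j (x (2*j - 1)) (x (2*j)))
          = (\<Prod>j\<in>{1..m} - {i}. psi m \<phi> j x powr (1 / real (m - 1)))"
        using rho_eq x by (intro prod.cong) auto
      also have "\<dots> = (\<Prod>j\<in>{1..m} - {i}. psi m \<phi> j x) powr (1 / real (m - 1))"
        by (simp add: prod_powr_distrib)
      also have "\<dots> = (\<phi> i x ^ (m - 1)) powr (1 / real (m - 1))" using Cprod[OF i xU] by simp
      also have "\<dots> = \<phi> i x"
      proof -
        have pos: "\<phi> i x > 0" using \<phi>_pos[OF i xU] .
        have nz: "real (m - 1) \<noteq> 0" using m2 by simp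
        have "(\<phi> i x ^ (m - 1)) powr (1 / real (m - 1)) = (\<phi> i x powr real (m - 1)) powr (1 / real (m - 1))"
          using pos by (simp add: powr_realpow)
        also have "\<dots> = \<phi> i x" using pos nz by (simp add: powr_powr)
        finally show ?thesis .
      qed
      finally show "\<phi> i x = (\<Prod>j\<in>{1..m} - {i}. \<rho> j (x (2*j - 1)) (x (2*j)))" by simp
    qed
    then have rr: "\<exists>\<rho> :: nat \<Rightarrow> real \<Rightarrow> real \<Rightarrow> real. \<forall>i\<in>{1..m}. \<forall>x\<in>V.
         \<phi> i x = (\<Prod>j\<in>{1..m} - {i}. \<rho> j (x (2*j - 1)) (x (2*j)))"
      by (rule exI[of _ \<rho>])
    have "open_Rn (2*m) V" unfolding V_def by (rule box_open)
    with pV VU rr show "\<exists>V. open_Rn (2*m) V \<and> p \<in> V \<and> V \<subseteq> U \<and>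
      (\<exists>\<rho> :: nat \<Rightarrow> real \<Rightarrow> real \<Rightarrow> real. \<forall>i\<in>{1..m}. \<forall>x\<in>V.
         \<phi> i x = (\<Prod>j\<in>{1..m} - {i}. \<rho> j (x (2*j - 1)) (x (2*j))))"
      by (intro exI[of _ V] conjI)
  qed
next
  assume h: "\<forall>p\<in>U. \<exists>V. open_Rn (2*m) V \<and> p \<in> V \<and> V \<subseteq> U \<and>
      (\<exists>\<rho> :: nat \<Rightarrow> real \<Rightarrow> real \<Rightarrow> real. \<forall>i\<in>{1..m}. \<forall>x\<in>V.
         \<phi> i x = (\<Prod>j\<in>{1..m} - {i}. \<rho> j (x (2*j - 1)) (x (2*j))))"
  show "\<forall>i\<in>{1..m}. \<forall>k\<in>{1..2*m} - {2*i - 1, 2*i}. \<forall>x\<in>U. pderiv k (psi m \<phi> i) x = 0"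
  proof (intro ballI)
    fix i k x assume i: "i \<in> {1..m}" and k: "k \<in> {1..2*m} - {2*i - 1, 2*i}" and x: "x \<in> U"
    obtain V where Vall: "open_Rn (2*m) V \<and> x \<in> V \<and> V \<subseteq> U \<and>
      (\<exists>\<rho> :: nat \<Rightarrow> real \<Rightarrow> real \<Rightarrow> real. \<forall>i\<in>{1..m}. \<forall>x\<in>V. \<phi> i x = (\<Prod>j\<in>{1..m} - {i}. \<rho> j (x (2*j - 1)) (x (2*j))))"
      using bspec[OF h x] by (rule exE)
    have V: "open_Rn (2*m) V" "x \<in> V" "V \<subseteq> U" using Vall by blast+
    have r0: "\<exists>\<rho> :: nat \<Rightarrow> real \<Rightarrow> real \<Rightarrow> real. \<forall>i\<in>{1..m}. \<forall>x\<in>V. \<phi> i x = (\<Prod>j\<in>{1..m} - {i}. \<rho> j (x (2*j - 1)) (x (2*j)))"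
      using Vall by (rule conjunct2[THEN conjunct2[THEN conjunct2]])
    obtain \<rho> :: "nat \<Rightarrow> real \<Rightarrow> real \<Rightarrow> real" where
      r: "\<forall>i\<in>{1..m}. \<forall>x\<in>V. \<phi> i x = (\<Prod>j\<in>{1..m} - {i}. \<rho> j (x (2*j - 1)) (x (2*j)))"
      using r0 by (elim exE)
    have psi_eq: "psi m \<phi> i y = \<rho> i (y (2*i - 1)) (y (2*i)) ^ (m - 1)" if y: "y \<in> V" for y
      unfolding psi_def
    proof (rule prod_rho_alg[of "{1..m}" i m "\<lambda>j. \<phi> j y" "\<lambda>l. \<rho> l (y (2*l - 1)) (y (2*l))"])
      show "\<And>j. j \<in> {1..m} \<Longrightarrow> \<phi> j y = (\<Prod>l\<in>{1..m} - {j}. \<rho> l (y (2*l - 1)) (y (2*l)))"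
        using r y by blast
      show "\<And>l. l \<in> {1..m} \<Longrightarrow> \<phi> l y > 0" using \<phi>_pos y V(3) by blast
    qed (use i m2 in auto)
    have k2: "k \<in> {1..2*m}" and kn: "k \<noteq> 2*i - 1" "k \<noteq> 2*i" using k by auto
    have ev: "eventually (\<lambda>t. psi m \<phi> i (x(k := t)) = \<rho> i (x (2*i - 1)) (x (2*i)) ^ (m - 1)) (nhds (x k))"
      using line_nbhd[OF V(1,2) k2]
    proof (rule eventually_mono)
      fix t assume xt: "x(k := t) \<in> V"
      have e1: "(x(k := t)) (2*i - 1) = x (2*i - 1)" using kn(1) by simp
      have e2: "(x(k := t)) (2*i) = x (2*i)" using kn(2) by simp
      show "psi m \<phi> i (x(k := t)) = \<rho> i (x (2*i - 1)) (x (2*i)) ^ (m - 1)"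
        using psi_eq[OF xt] unfolding e1 e2 .
    qed
    have "pderiv k (psi m \<phi> i) x = deriv (\<lambda>t. \<rho> i (x (2*i - 1)) (x (2*i)) ^ (m - 1)) (x k)"
      unfolding pderiv_def by (rule deriv_cong_ev[OF ev refl])
    then show "pderiv k (psi m \<phi> i) x = 0" by simp
  qed
qed

end


context
  fixes m :: nat and U :: "(nat \<Rightarrow> real) set" and \<phi> :: "nat \<Rightarrow> (nat \<Rightarrow> real) \<Rightarrow> real"
  assumes m2: "m \<ge> 2"
    and U_open: "open_Rn (2*m) U"
    and \<phi>_pos: "\<And>i x. i \<in> {1..m} \<Longrightarrow> x \<in> U \<Longrightarrow> \<phi> i x > 0"
    and \<phi>_smooth: "\<And>i. i \<in> {1..m} \<Longrightarrow> smooth_on (2*m) U (\<phi> i)"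
begin

lemma Kc_sub': "Kc m i \<subseteq> {1..2*m}" unfolding Kc_def by blast

lemma psi_pos': "i \<in> {1..m} \<Longrightarrow> y \<in> U \<Longrightarrow> psi m \<phi> i y > 0"
  by (rule psi_pos[OF m2 U_open \<phi>_pos \<phi>_smooth])

lemma prod_P2_d:
  assumes j: "j \<ge> 1"
  shows "(\<Prod>k\<in>P2 j. (if odd k then t ((k + 1) div 2) else 1)) = (t j :: real)"
proof -
  have ne: "2*j - 1 \<noteq> 2*j" using j by simp
  have o: "odd (2*j - 1)" using j by simp
  have dv: "(2*j - 1 + 1) div 2 = j" using j by simp
  show ?thesis unfolding P2_def using ne o dv by simp
qed

lemma prod_Kc_d:
  assumes i: "i \<in> {1..m}"
  shows "(\<Prod>k\<in>Kc m i. (if odd k then t ((k + 1) div 2) else 1)) = (\<Prod>j\<in>{1..m}-{i}. (t j :: real))"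
proof -
  have "(\<Prod>k\<in>Kc m i. (if odd k then t ((k + 1) div 2) else 1))
      = (\<Prod>k\<in>(\<Union>j\<in>{1..m}-{i}. P2 j). (if odd k then t ((k + 1) div 2) else 1))"
    using union_Kc[OF i] by simp
  also have "\<dots> = (\<Prod>j\<in>{1..m}-{i}. \<Prod>k\<in>P2 j. (if odd k then t ((k + 1) div 2) else 1))"
  proof (rule prod.UNION_disjoint)
    show "\<forall>ia\<in>{1..m} - {i}. \<forall>j\<in>{1..m} - {i}. ia \<noteq> j \<longrightarrow> P2 ia \<inter> P2 j = {}"
      using P2_meet by fastforce
  qed auto
  also have "\<dots> = (\<Prod>j\<in>{1..m}-{i}. t j)"
    by (intro prod.cong refl) (simp add: prod_P2_d)
  finally show ?thesis .
qed

context
  fixes \<sigma>i :: "nat \<Rightarrow> (nat \<Rightarrow> real) \<Rightarrow> nat set \<Rightarrow> real" and \<zeta> :: "(nat \<Rightarrow> real) \<Rightarrow> nat set \<Rightarrow> real"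
  assumes h\<sigma>: "\<And>i x. i \<in> {1..m} \<Longrightarrow> \<sigma>i i x = fsmult (psi m \<phi> i x) (wedge (dx (2*i - 1)) (dx (2*i)))"
    and h\<zeta>: "\<zeta> = (\<lambda>x. \<Sum>i\<in>{1..m}. - wedges (map (\<lambda>j. \<sigma>i j x) (filter (\<lambda>j. j \<noteq> i) [1..<m+1])))"
begin

lemma zcoef: "\<zeta> y L = (if L \<in> Kc m ` {1..m} then - (\<Prod>j\<in>{1..m}-{inv_into {1..m} (Kc m) L}. psi m \<phi> j y) else 0)"
  unfolding h\<zeta> using zeta_formula[of m \<sigma>i "psi m \<phi>", OF h\<sigma>] by simp

lemma zcoef_Kc: "i \<in> {1..m} \<Longrightarrow> \<zeta> y (Kc m i) = - (\<Prod>j\<in>{1..m}-{i}. psi m \<phi> j y)"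
  using zcoef[of y "Kc m i"] Kc_inj[of m] by (simp add: inv_into_f_f)

lemma zsupp: "\<zeta> y I \<noteq> 0 \<Longrightarrow> I \<subseteq> {1..2*m}"
proof -
  assume "\<zeta> y I \<noteq> 0"
  then have "I \<in> Kc m ` {1..m}" using zcoef[of y I] by (auto split: if_splits)
  then show ?thesis using Kc_sub' by blast
qed

lemma alg_const: "alg_constant (2*m) U \<zeta>"
  unfolding alg_constant_def same_type_def
proof (intro ballI)
  fix p q assume p: "p \<in> U" and q: "q \<in> U"
  define t where "t = (\<lambda>j. psi m \<phi> j q / psi m \<phi> j p)"
  define d where "d = (\<lambda>k. if odd k then t ((k + 1) div 2) else 1)"
  have tpos: "t j > 0" if "j \<in> {1..m}" for j
    unfolding t_def using psi_pos'[OF that p] psi_pos'[OF that q] by simp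
  have dnz: "d k \<noteq> 0" if "k \<in> {1..2*m}" for k
  proof -
    have j: "(k+1) div 2 \<in> {1..m}" using P2_cover[OF that] by blast
    show ?thesis unfolding d_def using tpos[OF j] by auto
  qed
  have "pullback (2*m) (diag d) (\<zeta> p) = \<zeta> q"
  proof
    fix L
    have "pullback (2*m) (diag d) (\<zeta> p) L = \<zeta> p L * (\<Prod>k\<in>L. d k)"
      by (rule pullback_diag) (rule zsupp)
    also have "\<dots> = \<zeta> q L"
    proof (cases "L \<in> Kc m ` {1..m}")
      case True
      then obtain i where i: "i \<in> {1..m}" and L: "L = Kc m i" by auto
      have "\<zeta> p L * (\<Prod>k\<in>L. d k) = - (\<Prod>j\<in>{1..m}-{i}. psi m \<phi> j p) * (\<Prod>j\<in>{1..m}-{i}. t j)"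
        using zcoef_Kc[OF i] prod_Kc_d[OF i, of t] L by (simp add: d_def)
      also have "\<dots> = - (\<Prod>j\<in>{1..m}-{i}. psi m \<phi> j p * t j)" by (simp add: prod.distrib)
      also have "\<dots> = - (\<Prod>j\<in>{1..m}-{i}. psi m \<phi> j q)"
      proof (intro arg_cong[where f=uminus] prod.cong refl)
        fix j assume "j \<in> {1..m}-{i}"
        then have "psi m \<phi> j p > 0" using psi_pos'[OF _ p] by blast
        then show "psi m \<phi> j p * t j = psi m \<phi> j q" by (simp add: t_def)
      qed
      also have "\<dots> = \<zeta> q L" using zcoef_Kc[OF i] L by simp
      finally show ?thesis .
    next
      case False
      then show ?thesis using zcoef[of p L] zcoef[of q L] by simp
    qed
    finally show "pullback (2*m) (diag d) (\<zeta> p) L = \<zeta> q L" .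
  qed
  moreover have "invertible_on (2*m) (diag d)" using dnz by (rule invertible_diag)
  ultimately show "\<exists>A. invertible_on (2*m) A \<and> pullback (2*m) A (\<zeta> p) = \<zeta> q" by blast
qed

lemma indiv: "indivisible (2*m) U \<zeta>"
  unfolding indivisible_def
proof (intro ballI allI impI, elim conjE)
  fix x \<xi> assume x: "x \<in> U" and deg: "form_deg (2*m) 1 \<xi>" and nz: "\<xi> \<noteq> 0"
  have "\<exists>I. \<xi> I \<noteq> 0"
  proof (rule ccontr)
    assume "\<not> (\<exists>I. \<xi> I \<noteq> 0)"
    then have "\<xi> = 0" by (simp add: fun_eq_iff)
    with nz show False by simp
  qed
  then obtain I where I: "\<xi> I \<noteq> 0" by blast
  have Isub: "I \<subseteq> {1..2*m}" and cI: "card I = 1" using deg I unfolding form_deg_def by blast+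
  have "\<exists>k. I = {k}" using cI by (simp add: card_1_singleton_iff)
  then obtain k where Ik: "I = {k}" by blast
  have k: "k \<in> {1..2*m}" using Isub Ik by blast
  define i where "i = (k + 1) div 2"
  have i: "i \<in> {1..m}" and kP: "k \<in> P2 i" using P2_cover[OF k] by (simp_all add: i_def)
  define L where "L = insert k (Kc m i)"
  have finL: "finite L" by (simp add: L_def Kc_def)
  define g where "g = (\<lambda>I'. wsign I' (L - I') * \<xi> I' * \<zeta> x (L - I'))"
  have rest: "(\<Sum>I'\<in>Pow L - {{k}}. g I') = 0"
  proof (rule sum.neutral, rule ballI)
    fix I' assume I': "I' \<in> Pow L - {{k}}"
    show "g I' = 0"
    proof (cases "\<xi> I' = 0")
      case True then show ?thesis by (simp add: g_def)
    next
      case False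
      then have "card I' = 1" using deg unfolding form_deg_def by blast
      then have "\<exists>k'. I' = {k'}" by (simp add: card_1_singleton_iff)
      then obtain k' where k': "I' = {k'}" by blast
      have "k' \<in> L" "k' \<noteq> k" using I' k' by blast+
      then have k'K: "k' \<in> Kc m i" unfolding L_def by blast
      have "L - {k'} \<notin> Kc m ` {1..m}" using Kmiss[OF i _ kP k'K] unfolding L_def by blast
      then have "\<zeta> x (L - I') = 0" using zcoef[of x "L - {k'}"] k' by simp
      then show ?thesis by (simp add: g_def)
    qed
  qed
  have "wedge \<xi> (\<zeta> x) L = g {k} + (\<Sum>I'\<in>Pow L - {{k}}. g I')"
    unfolding wedge_def g_def[symmetric]
    by (rule sum.remove) (use finL in \<open>auto simp: L_def\<close>)
  also have "\<dots> = wsign {k} (Kc m i) * \<xi> {k} * (- (\<Prod>j\<in>{1..m}-{i}. psi m \<phi> j x))"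
    using rest Kself[OF kP, of m] zcoef_Kc[OF i, of x] by (simp add: g_def L_def)
  finally have eq: "wedge \<xi> (\<zeta> x) L = wsign {k} (Kc m i) * \<xi> {k} * (- (\<Prod>j\<in>{1..m}-{i}. psi m \<phi> j x))" .
  have "wsign {k} (Kc m i) \<noteq> 0" by (simp add: wsign_def)
  moreover have "\<xi> {k} \<noteq> 0" using I Ik by simp
  moreover have "(\<Prod>j\<in>{1..m}-{i}. psi m \<phi> j x) > 0"
  proof (rule prod_pos)
    fix j assume "j \<in> {1..m}-{i}"
    then show "0 < psi m \<phi> j x" using psi_pos'[OF _ x] by blast
  qed
  ultimately have a: "wsign {k} (Kc m i) \<noteq> 0" "\<xi> {k} \<noteq> 0" "(\<Prod>j\<in>{1..m}-{i}. psi m \<phi> j x) \<noteq> 0"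
    by linarith+
  have "wedge \<xi> (\<zeta> x) L \<noteq> 0" unfolding eq using a by (simp only: mult_eq_0_iff neg_equal_0_iff_equal) blast
  then show "wedge \<xi> (\<zeta> x) \<noteq> 0" by (metis zero_fun_def)
qed

lemma dual:
  assumes hs: "\<sigma> = (\<lambda>x. \<Sum>i\<in>{1..m}. \<sigma>i i x)"
  shows "dual_fields (2*m) U \<sigma> \<zeta>"
  unfolding dual_fields_def
proof
  fix x assume x: "x \<in> U"
  define b where "b = (\<lambda>k. if odd k then psi m \<phi> ((k + 1) div 2) x else 1)"
  have bnz: "b k \<noteq> 0" if "k \<in> {1..2*m}" for k
  proof -
    have j: "(k+1) div 2 \<in> {1..m}" using P2_cover[OF that] by blast
    show ?thesis unfolding b_def using psi_pos'[OF j x] by auto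
  qed
  define si where "si = (\<lambda>i. wedge (lin (2*m) (diag b) (2*i - 1)) (lin (2*m) (diag b) (2*i)))"
  have si: "si i = \<sigma>i i x" if i: "i \<in> {1..m}" for i
  proof -
    have k1: "2*i - 1 \<in> {1..2*m}" "2*i \<in> {1..2*m}" using i by auto
    have b1: "b (2*i - 1) = psi m \<phi> i x" "b (2*i) = 1" using i by (auto simp: b_def)
    show ?thesis unfolding si_def lin_diag[OF k1(1)] lin_diag[OF k1(2)] b1 h\<sigma>[OF i]
      by (simp add: wedge_fsmult_left wedge_fsmult_right fsmult_fsmult fsmult_one)
  qed
  have mm: "2*m div 2 = m" by simp
  have s: "\<sigma> x = (\<Sum>i\<in>{1..m}. si i)" unfolding hs using si by simp
  have z: "\<zeta> x = - (\<Sum>i\<in>{1..m}. wedges (map si (filter (\<lambda>j. j \<noteq> i) [1..<m+1])))"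
  proof -
    have "\<zeta> x = (\<Sum>i\<in>{1..m}. - wedges (map si (filter (\<lambda>j. j \<noteq> i) [1..<m+1])))"
      unfolding h\<zeta>
    proof (intro sum.cong refl arg_cong[where f=uminus] arg_cong[where f=wedges] map_cong)
      fix i j assume "j \<in> set (filter (\<lambda>j. j \<noteq> i) [1..<m+1])"
      then have "j \<in> {1..m}" by auto
      then show "\<sigma>i j x = si j" using si by simp
    qed
    then show ?thesis by (simp add: sum_negf)
  qed
  show "is_dual (2*m) (\<sigma> x) (\<zeta> x)"
    unfolding is_dual_def Let_def mm
  proof (intro conjI exI[of _ "diag b"])
    show "even (2*m)" by simp
    show "invertible_on (2*m) (diag b)" using bnz by (rule invertible_diag)
    show "\<sigma> x = (\<Sum>i\<in>{1..m}. wedge (lin (2*m) (diag b) (2*i - 1)) (lin (2*m) (diag b) (2*i)))"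
      using s unfolding si_def .
    show "\<zeta> x = - (\<Sum>i\<in>{1..m}. wedges (map (\<lambda>i. wedge (lin (2*m) (diag b) (2*i - 1)) (lin (2*m) (diag b) (2*i)))
            (filter (\<lambda>j. j \<noteq> i) [1..<m+1])))"
      using z unfolding si_def .
  qed
qed

end
end

theorem theorem16p1:
  fixes m :: nat
    and U :: "(nat \<Rightarrow> real) set"
    and \<phi> :: "nat \<Rightarrow> (nat \<Rightarrow> real) \<Rightarrow> real"
    and \<Phi> :: "(nat \<Rightarrow> real) \<Rightarrow> real"
    and \<sigma>i :: "nat \<Rightarrow> (nat \<Rightarrow> real) \<Rightarrow> nat set \<Rightarrow> real"
    and \<sigma> \<zeta> :: "(nat \<Rightarrow> real) \<Rightarrow> nat set \<Rightarrow> real"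
  assumes m2: "m \<ge> 2"
    and U_open: "open_Rn (2*m) U"
    and \<phi>_pos: "\<And>i x. i \<in> {1..m} \<Longrightarrow> x \<in> U \<Longrightarrow> \<phi> i x > 0"
    and \<phi>_smooth: "\<And>i. i \<in> {1..m} \<Longrightarrow> smooth_on (2*m) U (\<phi> i)"
    and \<Phi>_def: "\<Phi> = (\<lambda>x. \<Prod>i\<in>{1..m}. \<phi> i x)"
    and \<sigma>i_def: "\<sigma>i = (\<lambda>i x. fsmult (\<phi> i x powr (1 - real m) * \<Phi> x)
                                  (wedge (dx (2*i - 1)) (dx (2*i))))"
    and \<sigma>_def: "\<sigma> = (\<lambda>x. \<Sum>i\<in>{1..m}. \<sigma>i i x)"
    and \<zeta>_def: "\<zeta> = (\<lambda>x. \<Sum>i\<in>{1..m}.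
                         - wedges (map (\<lambda>j. \<sigma>i j x) (filter (\<lambda>j. j \<noteq> i) [1..<m+1])))"
  shows "(alg_constant (2*m) U \<zeta> \<and> indivisible (2*m) U \<zeta>)
       \<and> dual_fields (2*m) U \<sigma> \<zeta>
       \<and> (closed_on (2*m) U \<zeta> \<longleftrightarrow>
            (\<forall>i\<in>{1..m}. \<forall>x\<in>U. pderiv (2*i - 1) (\<phi> i) x = 0 \<and> pderiv (2*i) (\<phi> i) x = 0))
       \<and> (closed_on (2*m) U \<sigma> \<longleftrightarrow>
            (\<forall>i\<in>{1..m}. \<forall>k\<in>{1..2*m} - {2*i - 1, 2*i}. \<forall>x\<in>U.
               pderiv k (\<lambda>y. \<phi> i y powr (1 - real m) * \<Phi> y) x = 0))
       \<and> ((\<forall>i\<in>{1..m}. \<forall>k\<in>{1..2*m} - {2*i - 1, 2*i}. \<forall>x\<in>U.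
               pderiv k (\<lambda>y. \<phi> i y powr (1 - real m) * \<Phi> y) x = 0) \<longleftrightarrow>
          (\<forall>p\<in>U. \<exists>V. open_Rn (2*m) V \<and> p \<in> V \<and> V \<subseteq> U \<and>
             (\<exists>\<rho> :: nat \<Rightarrow> real \<Rightarrow> real \<Rightarrow> real. \<forall>i\<in>{1..m}. \<forall>x\<in>V.
                \<phi> i x = (\<Prod>j\<in>{1..m} - {i}. \<rho> j (x (2*j - 1)) (x (2*j))))))"
  proof -
  have h\<sigma>: "\<And>i x. i \<in> {1..m} \<Longrightarrow> \<sigma>i i x = fsmult (psi m \<phi> i x) (wedge (dx (2*i - 1)) (dx (2*i)))"
    by (simp add: \<sigma>i_def \<Phi>_def psi_def)
  have pe: "\<And>i. (\<lambda>y. \<phi> i y powr (1 - real m) * \<Phi> y) = psi m \<phi> i"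
    by (rule ext) (simp add: \<Phi>_def psi_def)
  note A = alg_const[where m=m and U=U and \<phi>=\<phi>, OF m2 U_open \<phi>_pos \<phi>_smooth h\<sigma> \<zeta>_def]
  note B = indiv[where m=m and U=U and \<phi>=\<phi>, OF m2 U_open \<phi>_pos \<phi>_smooth h\<sigma> \<zeta>_def]
  note C = dual[where m=m and U=U and \<phi>=\<phi>, OF m2 U_open \<phi>_pos \<phi>_smooth h\<sigma> \<zeta>_def \<sigma>_def]
  note E = part_c[where m=m and U=U and \<phi>=\<phi>, OF m2 U_open \<phi>_pos \<phi>_smooth h\<sigma> \<zeta>_def]
  note F = part_d1[where m=m and U=U and \<phi>=\<phi>, OF m2 U_open \<phi>_pos \<phi>_smooth h\<sigma> \<sigma>_def]
  note G = part_d2[where m=m and U=U and \<phi>=\<phi>, OF m2 U_open \<phi>_pos \<phi>_smooth]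
  show ?thesis unfolding pe using A B C E F G by blast
qed

end
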